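(* Let $\omega(r)=\exp(\varepsilon r)$ and $\Omega(r)=\exp(\delta r)$, where $\delta>\varepsilon>0$. Then for each $r>0$ there exists $R>0$ such that $\omega^n(R)\ge\Omega^n(r)$ for all $n\in\mathbb N$.
   Context: $\omega^n,\Omega^n$ denote $n$-th iterates. *)

theory Defs
  imports Complex_Main
begin

end

theory Submission
  imports Defs "HOL-Real_Asymp.Real_Asymp"
begin

lemma aux_ev: fixes c d :: real assumes "c > 0"
  shows "eventually (\<lambda>s. (s + d)/c \<le> exp s) at_top"
proof -
  have "filterlim (\<lambda>s. exp s - (s + d)/c) at_top at_top"
    using assms by real_asymp
  hence "eventually (\<lambda>s. 0 \<le> exp s - (s + d)/c) at_top" unfolding filterlim_at_top by blast
  thus ?thesis by (rule eventually_mono) simp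
qed

lemma aux_ev2: fixes c d :: real assumes "c > 0"
  shows "eventually (\<lambda>s. 1 \<le> (s + d)/c) at_top"
proof -
  have "filterlim (\<lambda>s. (s + d)/c) at_top at_top"
    using assms by real_asymp
  thus ?thesis by (simp add: filterlim_at_top)
qed

theorem lemma3p3:
  fixes \<epsilon> \<delta> r :: real
  assumes "0 < \<epsilon>" and "\<epsilon> < \<delta>" and "0 < r"
  shows "\<exists>R>0. \<forall>n::nat. ((\<lambda>x. exp (\<epsilon> * x)) ^^ n) R \<ge> ((\<lambda>x. exp (\<delta> * x)) ^^ n) r"
proof -
  define m where "m = min r 1"
  have m0: "m > 0" using assms by (simp add: m_def)
  have ev: "eventually (\<lambda>s. exp s \<ge> (s + \<delta>*m)/(\<epsilon>*m) \<and> s \<ge> 0 \<and> (s + \<delta>*m)/(\<epsilon>*m) \<ge> 1) at_top"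
  proof (intro eventually_conj)
    have c: "\<epsilon>*m > 0" using assms m0 by simp
    show "eventually (\<lambda>s. exp s \<ge> (s + \<delta>*m)/(\<epsilon>*m)) at_top" using c by (rule aux_ev)
    show "eventually (\<lambda>s. s \<ge> (0::real)) at_top" by real_asymp
    show "eventually (\<lambda>s. (s + \<delta>*m)/(\<epsilon>*m) \<ge> 1) at_top" using c by (rule aux_ev2)
  qed
  then obtain s where s: "exp s \<ge> (s + \<delta>*m)/(\<epsilon>*m)" "s \<ge> 0" "(s + \<delta>*m)/(\<epsilon>*m) \<ge> 1"
    using eventually_happens'[OF _ ev] by auto
  define a where "a = (s + \<delta>*m)/(\<epsilon>*m)"
  have a0: "a > 0" using s(3) by (simp add: a_def)
  have ea: "\<epsilon>*a - \<delta> = s/m" using assms m0 by (simp add: a_def field_simps)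
  have m1: "m \<le> 1" "m \<le> r" by (auto simp: m_def)
  have ym: "((\<lambda>x. exp (\<delta> * x)) ^^ n) r \<ge> m" for n
  proof (induction n)
    case 0 then show ?case using m1 by simp
  next
    case (Suc k)
    have "exp (\<delta> * ((\<lambda>x. exp (\<delta> * x)) ^^ k) r) \<ge> 1"
      using Suc m0 assms by simp
    then show ?case using m1 by (simp del: one_le_exp_iff)
  qed
  have inv: "((\<lambda>x. exp (\<epsilon> * x)) ^^ n) (a*r) \<ge> a * ((\<lambda>x. exp (\<delta> * x)) ^^ n) r" for n
  proof (induction n)
    case 0 then show ?case by simp
  next
    case (Suc n)
    define x where "x = ((\<lambda>x. exp (\<epsilon> * x)) ^^ n) (a*r)"
    define y where "y = ((\<lambda>x. exp (\<delta> * x)) ^^ n) r"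
    have xy: "x \<ge> a*y" using Suc by (simp add: x_def y_def)
    have y: "y \<ge> m" using ym by (simp add: y_def)
    have e1: "exp (\<epsilon>*x) \<ge> exp (\<epsilon>*(a*y))" using xy assms by simp
    have e2: "exp (\<epsilon>*(a*y)) = exp (\<delta>*y) * exp ((\<epsilon>*a-\<delta>)*y)"
      by (simp add: exp_add[symmetric] algebra_simps)
    have e3: "exp ((\<epsilon>*a-\<delta>)*y) \<ge> exp s"
    proof -
      have "(\<epsilon>*a-\<delta>)*y = s/m*y" using ea by simp
      moreover have "s/m*y \<ge> s/m*m" using y s m0 by (intro mult_left_mono) auto
      ultimately show ?thesis using m0 by simp
    qed
    have e4: "a \<le> exp ((\<epsilon>*a-\<delta>)*y)" using s(1) e3 unfolding a_def by linarith
    have e5: "exp (\<delta>*y) * a \<le> exp (\<delta>*y) * exp ((\<epsilon>*a-\<delta>)*y)"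
      using e4 by (intro mult_left_mono) auto
    have "exp (\<delta>*y) * a \<le> exp (\<epsilon>*x)" using e1 e2 e5 by linarith
    hence "exp (\<epsilon>*x) \<ge> a * exp (\<delta>*y)" by (simp only: mult.commute)
    then show ?case by (simp add: x_def y_def)
  qed
  have "((\<lambda>x. exp (\<epsilon> * x)) ^^ n) (a*r) \<ge> ((\<lambda>x. exp (\<delta> * x)) ^^ n) r" for n
  proof -
    have "a \<ge> 1" using s(3) by (simp add: a_def)
    moreover have "((\<lambda>x. exp (\<delta> * x)) ^^ n) r > 0" using ym[of n] m0 by linarith
    ultimately have "1 * ((\<lambda>x. exp (\<delta> * x)) ^^ n) r \<le> a * ((\<lambda>x. exp (\<delta> * x)) ^^ n) r"
      by (intro mult_right_mono) auto
    thus ?thesis using inv[of n] by linarith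
  qed
  then show ?thesis using a0 assms by (intro exI[of _ "a*r"]) auto
qed

end
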